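(* There is a constant $c_0>0$ such that for every $N$ for which some pair $(N,M)$ is non-feasible for the family of line graphs of star-forests, the smallest such $M$ satisfies \[M \geq \binom{N-\lceil (-15+\sqrt{153+72N})/2\rceil}{2} > \frac{N^2}{2} - c_0N\sqrt{N}.\]
   Context: All graphs are finite and simple; $L(F)$ is the line graph of $F$. A star-forest is a forest each of whose components is a star $K_{1,n_j}$ ($n_j\ge1$). For integers $N\ge1$ and $0\le M\le\binom N2$, $(N,M)$ is feasible for the family of line graphs of star-forests if there is a star-forest $F$ with $N$ edges such that $L(F)$ has exactly $M$ edges; otherwise it is non-feasible. *)

theory Defs
  imports Complex_Main
begin

text \<open>A finite simple graph is represented by its edge set, a finite set of
2-element vertex sets (vertices are natural numbers; isolated vertices are
irrelevant for counting edges).\<close>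

definition star_edges :: "nat \<Rightarrow> nat set \<Rightarrow> nat set set" where
  "star_edges c L = {{c, l} | l. l \<in> L}"

definition star_forest :: "nat set set \<Rightarrow> bool" where
  "star_forest E \<longleftrightarrow>
     (\<exists>S :: (nat \<times> nat set) set.
        finite S \<and>
        (\<forall>(c, L)\<in>S. finite L \<and> L \<noteq> {} \<and> c \<notin> L) \<and>
        (\<forall>(c, L)\<in>S. \<forall>(c', L')\<in>S. (c, L) \<noteq> (c', L') \<longrightarrow>
              insert c L \<inter> insert c' L' = {}) \<and>
        E = (\<Union>(c, L)\<in>S. star_edges c L))"

definition line_graph_edges :: "'a set set \<Rightarrow> 'a set set set" where
  "line_graph_edges E = {{e, f} | e f. e \<in> E \<and> f \<in> E \<and> e \<noteq> f \<and> e \<inter> f \<noteq> {}}"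

definition feasible_SF :: "nat \<Rightarrow> nat \<Rightarrow> bool" where
  "feasible_SF N M \<longleftrightarrow>
     (\<exists>E. star_forest E \<and> card E = N \<and> card (line_graph_edges E) = M)"

definition nonfeasible_SF :: "nat \<Rightarrow> nat \<Rightarrow> bool" where
  "nonfeasible_SF N M \<longleftrightarrow> M \<le> N choose 2 \<and> \<not> feasible_SF N M"

end

theory Submission
  imports Defs
begin


lemma lg_mem: "x \<in> line_graph_edges E \<longleftrightarrow>
  (\<exists>e f. x = {e,f} \<and> e \<in> E \<and> f \<in> E \<and> e \<noteq> f \<and> e \<inter> f \<noteq> {})"
  unfolding line_graph_edges_def by (simp only: mem_Collect_eq)

lemma card_star_edges:
  assumes "finite L" shows "card (star_edges c L) = card L"
proof -
  have "star_edges c L = (\<lambda>l. {c,l}) ` L" unfolding star_edges_def by auto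
  moreover have "inj_on (\<lambda>l. {c,l}) L" by (auto simp: inj_on_def doubleton_eq_iff)
  ultimately show ?thesis by (simp add: card_image)
qed

lemma lg_star:
  assumes "finite L" "c \<notin> L"
  shows "card (line_graph_edges (star_edges c L)) = card L choose 2"
proof -
  let ?f = "\<lambda>P. (\<lambda>l. {c,l}) ` P"
  have eq: "line_graph_edges (star_edges c L) = ?f ` {P. P \<subseteq> L \<and> card P = 2}"
  proof
    show "line_graph_edges (star_edges c L) \<subseteq> ?f ` {P. P \<subseteq> L \<and> card P = 2}"
    proof
      fix x assume "x \<in> line_graph_edges (star_edges c L)"
      then obtain l l' where x: "x = {{c,l},{c,l'}}" "l \<in> L" "l' \<in> L" "l \<noteq> l'"
        unfolding line_graph_edges_def star_edges_def by auto
      then have "x = ?f {l,l'}" by auto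
      moreover have "{l,l'} \<in> {P. P \<subseteq> L \<and> card P = 2}" using x by auto
      ultimately show "x \<in> ?f ` {P. P \<subseteq> L \<and> card P = 2}" by blast
    qed
  next
    show "?f ` {P. P \<subseteq> L \<and> card P = 2} \<subseteq> line_graph_edges (star_edges c L)"
    proof
      fix x assume "x \<in> ?f ` {P. P \<subseteq> L \<and> card P = 2}"
      then obtain P where P: "P \<subseteq> L" "card P = 2" "x = ?f P" by auto
      then obtain l l' where "P = {l,l'}" "l \<noteq> l'" by (meson card_2_iff)
      then have x: "x = {{c,l},{c,l'}}" using P by auto
      have l: "l \<in> L" "l' \<in> L" using P \<open>P = {l,l'}\<close> by auto
      have m: "{c,l} \<in> star_edges c L" "{c,l'} \<in> star_edges c L"
        using l unfolding star_edges_def by auto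
      have ne: "{c,l} \<noteq> {c,l'}" using \<open>l \<noteq> l'\<close> l assms(2) by (auto simp: doubleton_eq_iff)
      have int: "{c,l} \<inter> {c,l'} \<noteq> {}" by auto
      show "x \<in> line_graph_edges (star_edges c L)" unfolding lg_mem
        using x m ne int by blast
    qed
  qed
  have inj: "inj_on ?f {P. P \<subseteq> L \<and> card P = 2}"
  proof (rule inj_onI)
    fix P Q assume P: "P \<in> {P. P \<subseteq> L \<and> card P = 2}" and Q: "Q \<in> {P. P \<subseteq> L \<and> card P = 2}"
      and e: "?f P = ?f Q"
    show "P = Q"
    proof (rule set_eqI)
      fix l
      show "l \<in> P \<longleftrightarrow> l \<in> Q"
      proof
        assume "l \<in> P" then have "{c,l} \<in> ?f Q" using e by auto
        then obtain l' where "l' \<in> Q" "{c,l} = {c,l'}" by auto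
        then show "l \<in> Q" using P Q assms \<open>l \<in> P\<close> by (auto simp: doubleton_eq_iff)
      next
        assume "l \<in> Q" then have "{c,l} \<in> ?f P" using e by auto
        then obtain l' where "l' \<in> P" "{c,l} = {c,l'}" by auto
        then show "l \<in> P" using P Q assms \<open>l \<in> Q\<close> by (auto simp: doubleton_eq_iff)
      qed
    qed
  qed
  show ?thesis unfolding eq using card_image[OF inj] n_subsets[OF assms(1)] by simp
qed

lemma lg_union:
  assumes "finite E" "finite F" "\<forall>e\<in>E. \<forall>f\<in>F. e \<inter> f = {}" "\<forall>e\<in>E. e \<noteq> {}"
  shows "card (line_graph_edges (E \<union> F)) = card (line_graph_edges E) + card (line_graph_edges F)"
proof -
  have eq: "line_graph_edges (E \<union> F) = line_graph_edges E \<union> line_graph_edges F"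
  proof
    show "line_graph_edges (E \<union> F) \<subseteq> line_graph_edges E \<union> line_graph_edges F"
    proof
      fix x assume "x \<in> line_graph_edges (E \<union> F)"
      then obtain e f where x: "x = {e,f}" "e \<in> E \<union> F" "f \<in> E \<union> F" "e \<noteq> f" "e \<inter> f \<noteq> {}"
        unfolding line_graph_edges_def by blast
      have "(e \<in> E \<and> f \<in> E) \<or> (e \<in> F \<and> f \<in> F)"
        using x assms(3) by (metis Int_commute Un_iff)
      then show "x \<in> line_graph_edges E \<union> line_graph_edges F"
        using x unfolding line_graph_edges_def by blast
    qed
  next
    show "line_graph_edges E \<union> line_graph_edges F \<subseteq> line_graph_edges (E \<union> F)"
      unfolding line_graph_edges_def by blast
  qed
  have sub: "line_graph_edges X \<subseteq> Pow X" for X :: "'a set set"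
    unfolding line_graph_edges_def by auto
  have fin: "finite (line_graph_edges X)" if "finite X" for X :: "'a set set"
    using sub[of X] that by (meson finite_Pow_iff finite_subset)
  have EF: "E \<inter> F = {}" using assms(3,4) by fastforce
  have disj: "line_graph_edges E \<inter> line_graph_edges F = {}"
  proof (rule ccontr)
    assume "line_graph_edges E \<inter> line_graph_edges F \<noteq> {}"
    then obtain x where "x \<in> line_graph_edges E" "x \<in> line_graph_edges F" by blast
    obtain e f where ef: "x = {e,f}" "e \<in> E" using \<open>x \<in> line_graph_edges E\<close> unfolding lg_mem by blast
    obtain e' f' where ef': "x = {e',f'}" "e' \<in> F" "f' \<in> F"
      using \<open>x \<in> line_graph_edges F\<close> unfolding lg_mem by blast
    have "e \<in> {e',f'}" using ef ef' by auto
    then have "e \<in> F" using ef' by auto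
    then show False using EF \<open>e \<in> E\<close> by blast
  qed
  show ?thesis unfolding eq using card_Un_disjoint[OF fin fin disj] assms(1,2) by simp
qed

lemma feasible_add:
  assumes "feasible_SF N M" "n \<ge> 1"
  shows "feasible_SF (N + n) (M + (n choose 2))"
proof -
  obtain E where E: "star_forest E" "card E = N" "card (line_graph_edges E) = M"
    using assms(1) unfolding feasible_SF_def by blast
  obtain S :: "(nat \<times> nat set) set" where S: "finite S"
    "\<forall>(c, L)\<in>S. finite L \<and> L \<noteq> {} \<and> c \<notin> L"
    "\<forall>(c, L)\<in>S. \<forall>(c', L')\<in>S. (c, L) \<noteq> (c', L') \<longrightarrow> insert c L \<inter> insert c' L' = {}"
    "E = (\<Union>(c, L)\<in>S. star_edges c L)"
    using E(1) unfolding star_forest_def by blast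
  define V where "V = (\<Union>(c, L)\<in>S. insert c L)"
  have finV: "finite V" unfolding V_def using S(1,2) by auto
  define m where "m = Suc (Max (insert 0 V))"
  have Vm: "v < m" if "v \<in> V" for v
    using that finV unfolding m_def by (simp add: le_imp_less_Suc)
  define L0 where "L0 = {m+1..m+n}"
  define F where "F = star_edges m L0"
  have finL0: "finite L0" and L0ne: "L0 \<noteq> {}" and mL0: "m \<notin> L0" and cardL0: "card L0 = n"
    using assms(2) unfolding L0_def by auto
  have finE: "finite E" unfolding S(4) star_edges_def
  proof (rule finite_UN_I[OF S(1)])
    fix x assume "x \<in> S" then show "finite (case x of (c, L) \<Rightarrow> {{c, l} |l. l \<in> L})"
      using S(2) by (cases x) auto
  qed
  have EV: "e \<subseteq> V" "e \<noteq> {}" if "e \<in> E" for e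
    using that unfolding S(4) V_def star_edges_def by auto
  have Fm: "x \<ge> m" if "f \<in> F" "x \<in> f" for f x
    using that unfolding F_def star_edges_def L0_def by auto
  have disj: "\<forall>e\<in>E. \<forall>f\<in>F. e \<inter> f = {}"
  proof (intro ballI)
    fix e f assume "e \<in> E" "f \<in> F"
    show "e \<inter> f = {}"
    proof (rule ccontr)
      assume "e \<inter> f \<noteq> {}"
      then obtain x where "x \<in> e" "x \<in> f" by blast
      then show False using EV[OF \<open>e \<in> E\<close>] Vm Fm[OF \<open>f \<in> F\<close>] by force
    qed
  qed
  have finF: "finite F" unfolding F_def star_edges_def using finL0 by auto
  have EF: "E \<inter> F = {}" using disj EV by fastforce
  have cardEF: "card (E \<union> F) = N + n"
    using card_Un_disjoint[OF finE finF EF] E(2) card_star_edges[OF finL0] cardL0 F_def by simp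
  have lgEF: "card (line_graph_edges (E \<union> F)) = M + (n choose 2)"
    using lg_union[OF finE finF disj] EV E(3) lg_star[OF finL0 mL0] cardL0 F_def by simp
  have mV: "m \<notin> V" using Vm by blast
  have L0V: "L0 \<inter> V = {}" using Vm unfolding L0_def by fastforce
  have "star_forest (E \<union> F)"
    unfolding star_forest_def
  proof (intro exI[of _ "insert (m, L0) S"] conjI)
    show "finite (insert (m, L0) S)" using S(1) by simp
    show "\<forall>(c, L)\<in>insert (m, L0) S. finite L \<and> L \<noteq> {} \<and> c \<notin> L"
      using S(2) finL0 L0ne mL0 by auto
    have sepS: "insert c L \<inter> insert m L0 = {}" if "(c, L) \<in> S" for c L
    proof -
      have "insert c L \<subseteq> V" using that unfolding V_def by blast
      then show ?thesis using mV L0V by blast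
    qed
    have neq: "(c, L) \<noteq> (m, L0)" if "(c, L) \<in> S" for c L
      using that mV unfolding V_def by blast
    show "\<forall>(c, L)\<in>insert (m, L0) S. \<forall>(c', L')\<in>insert (m, L0) S.
       (c, L) \<noteq> (c', L') \<longrightarrow> insert c L \<inter> insert c' L' = {}"
      using S(3) sepS by blast
    show "E \<union> F = (\<Union>(c, L)\<in>insert (m, L0) S. star_edges c L)"
      using S(4) F_def by auto
  qed
  then show ?thesis unfolding feasible_SF_def using cardEF lgEF by blast
qed

lemma feasible_00: "feasible_SF 0 0"
proof -
  have "star_forest {}" unfolding star_forest_def
    by (intro exI[of _ "{}"]) auto
  moreover have "line_graph_edges ({} :: nat set set) = {}" unfolding line_graph_edges_def by auto
  ultimately show ?thesis unfolding feasible_SF_def by (intro exI[of _ "{}"]) auto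
qed



inductive rep :: "nat \<Rightarrow> nat \<Rightarrow> bool" where
  rep0: "rep 0 0"
| repS: "rep B M \<Longrightarrow> n \<ge> 1 \<Longrightarrow> rep (B + n) (M + (n choose 2))"

lemma rep_feasible: "rep B M \<Longrightarrow> feasible_SF B M"
  by (induction rule: rep.induct) (auto intro: feasible_00 feasible_add)

lemma rep_pad: "rep B M \<Longrightarrow> rep (B + d) M"
proof (induction d)
  case 0 then show ?case by simp
next
  case (Suc d)
  then have "rep (B + d + 1) (M + (1 choose 2))" by (intro repS) auto
  moreover have "Suc 0 choose 2 = 0" by (simp add: binomial_eq_0)
  ultimately show ?case by simp
qed

lemma rep_ones: "rep (2 * r) r"
proof (induction r)
  case 0 then show ?case by (simp add: rep0)
next
  case (Suc r)
  then have "rep (2 * r + 2) (r + (2 choose 2))" by (intro repS) auto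
  then show ?case by simp
qed

lemma choose2_Suc: "Suc a choose 2 = (a choose 2) + a"
  by (simp add: numeral_2_eq_2)

lemma tri_decomp: "\<exists>a r. M = (a choose 2) + r \<and> r < a"
proof (induction M)
  case 0 then show ?case by (intro exI[of _ 1] exI[of _ 0]) auto
next
  case (Suc M)
  then obtain a r where ar: "M = (a choose 2) + r" "r < a" by blast
  show ?case
  proof (cases "Suc r < a")
    case True then show ?thesis using ar by (intro exI[of _ a] exI[of _ "Suc r"]) auto
  next
    case False
    then have "Suc r = a" using ar by simp
    then have "Suc M = (Suc a choose 2) + 0" using ar choose2_Suc by simp
    then show ?thesis by blast
  qed
qed

lemma choose2_mono: "a \<le> b \<Longrightarrow> (a choose 2) \<le> (b choose 2)"
  by (rule binomial_right_mono)

lemma two_choose2: "2 * (b choose 2) = b * (b - 1)"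
proof (induction b)
  case 0 then show ?case by simp
next
  case (Suc b)
  then show ?case unfolding choose2_Suc by (cases b) (auto simp: algebra_simps)
qed

lemma main_rep:
  fixes N k M :: nat
  assumes k: "18 * N \<le> k * k + 15 * k + 18" and M: "M < (N - k) choose 2"
  shows "rep N M"
proof -
  obtain a r1 where a: "M = (a choose 2) + r1" "r1 < a" using tri_decomp by blast
  obtain b r2 where b: "r1 = (b choose 2) + r2" "r2 < b" using tri_decomp by blast
  have "(a choose 2) < (N - k) choose 2" using a M by simp
  then have aN: "a < N - k" using choose2_mono by (meson not_less)
  have r1b: "(b choose 2) \<le> N - k - 2" using a b aN by simp
  have b3: "3 * b \<le> k + 3"
  proof (rule ccontr)
    assume "\<not> 3 * b \<le> k + 3"
    then have h: "k + 4 \<le> 3 * b" by simp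
    then have h2: "k + 1 \<le> 3 * b - 3" by simp
    have "(k + 4) * (k + 1) \<le> (3 * b) * (3 * b - 3)" using mult_le_mono[OF h h2] .
    also have "\<dots> = 9 * (b * (b - 1))" by (simp add: algebra_simps diff_mult_distrib2)
    also have "\<dots> = 18 * (b choose 2)" using two_choose2[of b] by simp
    also have "\<dots> \<le> 18 * (N - k - 2)" using r1b by simp
    finally have "(k + 4) * (k + 1) \<le> 18 * (N - k - 2)" .
    then show False using k aN by (simp add: algebra_simps diff_mult_distrib2)
  qed
  have "rep (2 * r2) r2" by (rule rep_ones)
  then have "rep (2 * r2 + b) (r2 + (b choose 2))" by (rule repS) (use b in auto)
  then have "rep (2 * r2 + b + a) (r2 + (b choose 2) + (a choose 2))" by (rule repS) (use a in auto)
  then have R: "rep (2 * r2 + b + a) M" using a b by (simp add: algebra_simps)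
  have "2 * r2 + b + a \<le> N" using b3 b aN by linarith
  then show ?thesis using rep_pad[OF R, of "N - (2 * r2 + b + a)"] by simp
qed



lemma k_facts:
  fixes N :: nat
  assumes N: "N \<ge> 1"
  defines "k \<equiv> nat \<lceil>(-15 + sqrt (153 + 72 * real N)) / 2\<rceil>"
  shows "18 * N \<le> k * k + 15 * k + 18" "real (2 * k + 1) < 16 * sqrt (real N)"
proof -
  define s where "s = sqrt (153 + 72 * real N)"
  define x where "x = (-15 + s) / 2"
  have s15: "s \<ge> 15"
  proof -
    have "sqrt 225 \<le> s" unfolding s_def using N by (intro real_sqrt_le_mono) simp
    moreover have "sqrt (225::real) = 15" by (simp add: real_sqrt_unique)
    ultimately show ?thesis by simp
  qed
  have x0: "x \<ge> 0" unfolding x_def using s15 by simp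
  have kx: "real k = of_int \<lceil>x\<rceil>" unfolding k_def x_def[symmetric] s_def[symmetric]
    using x0 by simp
  have xk: "x \<le> real k" using kx by simp
  have kx1: "real k < x + 1" using kx by linarith
  have ss: "s * s = 153 + 72 * real N" unfolding s_def by simp
  have "s \<le> 2 * real k + 15" using xk unfolding x_def by simp
  then have "s * s \<le> (2 * real k + 15) * (2 * real k + 15)" using s15 by (intro mult_mono) auto
  then have "153 + 72 * real N \<le> 4 * (real k * real k) + 60 * real k + 225"
    using ss by (simp add: algebra_simps)
  then have "real (18 * N) \<le> real (k * k + 15 * k + 18)" by simp
  then show "18 * N \<le> k * k + 15 * k + 18" by (simp only: of_nat_le_iff)
  have "s \<le> sqrt (225 * real N)" unfolding s_def using N by (intro real_sqrt_le_mono) simp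
  also have "\<dots> = 15 * sqrt (real N)" by (simp add: real_sqrt_mult)
  finally have "s \<le> 15 * sqrt (real N)" .
  moreover have "sqrt (real N) \<ge> 0" by simp
  moreover have "real (2 * k + 1) < s - 12" using kx1 unfolding x_def by (simp add: field_simps)
  ultimately show "real (2 * k + 1) < 16 * sqrt (real N)" by linarith
qed

lemma b_bound:
  fixes N k :: nat
  shows "real ((N - k) choose 2) \<ge> (real N ^ 2 - real (2 * k + 1) * real N) / 2"
proof (cases "k < N")
  case True
  have "2 * ((N - k) choose 2) = (N - k) * (N - k - 1)" by (rule two_choose2)
  then have "2 * real ((N - k) choose 2) = real (N - k) * real (N - k - 1)"
    by (metis of_nat_mult of_nat_numeral)
  also have "\<dots> = (real N - real k) * (real N - real k - 1)" using True
    by (simp add: of_nat_diff)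
  also have "\<dots> = real N ^ 2 - real (2 * k + 1) * real N + (real k * real k + real k)"
    by (simp add: algebra_simps power2_eq_square)
  finally have e: "2 * real ((N - k) choose 2) = real N ^ 2 - real (2 * k + 1) * real N + (real k * real k + real k)" .
  define P where "P = (real N)\<^sup>2 - real (2 * k + 1) * real N"
  define Z where "Z = real k * real k + real k"
  have "2 * real ((N - k) choose 2) = P + Z" "0 \<le> Z" using e unfolding P_def Z_def by auto
  then have "P / 2 \<le> real ((N - k) choose 2)" by simp
  then show ?thesis unfolding P_def .
next
  case False
  then have "real N \<le> real k" by simp
  then have "real N * real N \<le> real (2 * k + 1) * real N" by (intro mult_right_mono) auto
  then show ?thesis by (simp add: power2_eq_square)
qed

theorem mainTheorem8:
  "\<exists>c0::real. c0 > 0 \<and>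
     (\<forall>N::nat. N \<ge> 1 \<longrightarrow> (\<exists>M. nonfeasible_SF N M) \<longrightarrow>
        (let m = (LEAST M. nonfeasible_SF N M);
             b = (N - nat \<lceil>(-15 + sqrt (153 + 72 * real N)) / 2\<rceil>) choose 2
         in m \<ge> b \<and> real b > real N ^ 2 / 2 - c0 * real N * sqrt (real N)))"
proof (intro exI[of _ 8] conjI allI impI)
  show "(0::real) < 8" by simp
  fix N :: nat
  assume N: "N \<ge> 1" and ex: "\<exists>M. nonfeasible_SF N M"
  define k where "k = nat \<lceil>(-15 + sqrt (153 + 72 * real N)) / 2\<rceil>"
  define m where "m = (LEAST M. nonfeasible_SF N M)"
  define b where "b = (N - k) choose 2"
  have K1: "18 * N \<le> k * k + 15 * k + 18" and K2: "real (2 * k + 1) < 16 * sqrt (real N)"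
    using k_facts[OF N] unfolding k_def by auto
  have nm: "nonfeasible_SF N m" unfolding m_def using ex by (rule LeastI_ex)
  have mb: "b \<le> m"
  proof (rule ccontr)
    assume "\<not> b \<le> m"
    then have "m < (N - k) choose 2" unfolding b_def by simp
    then have "feasible_SF N m" using main_rep[OF K1] rep_feasible by blast
    then show False using nm unfolding nonfeasible_SF_def by blast
  qed
  have Npos: "real N > 0" using N by simp
  have "real (2 * k + 1) * real N < 16 * sqrt (real N) * real N"
    using K2 Npos by (intro mult_strict_right_mono) auto
  then have "real N ^ 2 / 2 - 8 * real N * sqrt (real N) < (real N ^ 2 - real (2 * k + 1) * real N) / 2"
    by (simp add: algebra_simps)
  also have "\<dots> \<le> real b" unfolding b_def by (rule b_bound)
  finally have "real N ^ 2 / 2 - 8 * real N * sqrt (real N) < real b" .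
  then show "let m = (LEAST M. nonfeasible_SF N M);
             b = (N - nat \<lceil>(-15 + sqrt (153 + 72 * real N)) / 2\<rceil>) choose 2
         in m \<ge> b \<and> real b > real N ^ 2 / 2 - 8 * real N * sqrt (real N)"
    using mb unfolding m_def b_def k_def Let_def by simp
qed

end
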